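(* Let $a,b$ be unitary matrices of the same size. If $b^{-1}a^2b=a^3$, then $ab^{-1}ab=b^{-1}aba$. *)

theory Defs
  imports "HOL-Analysis.Analysis"
begin

definition conj_transpose :: "complex^'n^'m \<Rightarrow> complex^'m^'n" where
  "conj_transpose A = (\<chi> i j. cnj (A $ j $ i))"

definition unitary :: "complex^'n^'n \<Rightarrow> bool" where
  "unitary U \<longleftrightarrow> conj_transpose U ** U = mat 1 \<and> U ** conj_transpose U = mat 1"

end

theory Submission
  imports Defs "HOL-Computational_Algebra.Polynomial" "HOL-Computational_Algebra.Fundamental_Theorem_Algebra"
begin


type_synonym 'n cm = "complex^'n^'n"

lemma if0_mult: "(if P then (x::complex) else 0) * y = (if P then x * y else 0)"
  "y * (if P then (x::complex) else 0) = (if P then y * x else 0)" by auto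

lemma mat_mult_left: "mat x ** (A::('n::finite) cm) = (\<chi> i j. x * A$i$j)"
  unfolding mat_def matrix_matrix_mult_def
  by (simp add: vec_eq_iff if0_mult)

lemma mat_mult_right: "(A::('n::finite) cm) ** mat x = (\<chi> i j. x * A$i$j)"
  unfolding mat_def matrix_matrix_mult_def
  by (simp add: vec_eq_iff if0_mult mult.commute)

lemma mat_vec: "mat x *v (v::complex^'n::finite) = x *s v"
  unfolding mat_def matrix_vector_mult_def
  by (simp add: vec_eq_iff if0_mult)

lemma mat_add_c: "mat (x + y) = (mat x + mat y :: ('n::finite) cm)"
  by (simp add: mat_def vec_eq_iff)

lemma mat_uminus_c: "mat (- x) = (- mat x :: ('n::finite) cm)"
  by (simp add: mat_def vec_eq_iff)

lemma mat_mult_c: "mat x ** mat y = (mat (x * y) :: ('n::finite) cm)"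
  unfolding mat_mult_left by (simp add: mat_def vec_eq_iff)

lemma mat_comm: "mat x ** (A::('n::finite) cm) = A ** mat x"
  by (simp add: mat_mult_left mat_mult_right)

lemma mat_comm2: "mat x ** ((A::('n::finite) cm) ** M) = A ** (mat x ** M)"
  by (metis mat_comm matrix_mul_assoc)

lemma matrix_add_rdistrib': "((B + C) ** A) = (B ** A) + (C ** (A::('n::finite) cm))"
  by (simp add: matrix_matrix_mult_def vec_eq_iff sum.distrib distrib_right)

lemma matrix_diff_rdistrib': "((B - C) ** A) = (B ** A) - (C ** (A::('n::finite) cm))"
  by (simp add: matrix_matrix_mult_def vec_eq_iff sum_subtractf left_diff_distrib)

lemma matrix_diff_ldistrib': "(A ** (B - C)) = (A ** B) - (A ** (C::('n::finite) cm))"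
  by (simp add: matrix_matrix_mult_def vec_eq_iff sum_subtractf right_diff_distrib)

lemma matrix_sum_ldistrib: "(A::('n::finite) cm) ** sum f S = sum (\<lambda>i. A ** f i) S"
  by (induction S rule: infinite_finite_induct) (auto simp: matrix_add_ldistrib)

lemma matrix_sum_rdistrib: "sum f S ** (A::('n::finite) cm) = sum (\<lambda>i. f i ** A) S"
  by (induction S rule: infinite_finite_induct) (auto simp: matrix_add_rdistrib')

fun mpow :: "('n::finite) cm \<Rightarrow> nat \<Rightarrow> 'n cm" where
  "mpow A 0 = mat 1" | "mpow A (Suc k) = A ** mpow A k"

lemma mpow_comm: "A ** mpow A k = mpow A k ** A"
  by (induction k) (auto simp: matrix_mul_assoc)

lemma mpow_add: "mpow A (m + n) = mpow A m ** mpow A n"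
  by (induction m) (auto simp: matrix_mul_assoc)

lemma mpow_mult: "mpow A (m * n) = mpow (mpow A m) n"
  by (induction n) (auto simp: mpow_add mult.commute[of m] )

definition peval :: "complex poly \<Rightarrow> ('n::finite) cm \<Rightarrow> 'n cm" where
  "peval p A = (\<Sum>i\<le>degree p. mat (coeff p i) ** mpow A i)"

lemma peval_bound:
  assumes "degree p \<le> n"
  shows "peval p A = (\<Sum>i\<le>n. mat (coeff p i) ** mpow A i)"
  unfolding peval_def
  by (rule sum.mono_neutral_left) (use assms in \<open>auto simp: coeff_eq_0\<close>)

lemma peval_0[simp]: "peval 0 A = 0"
  by (simp add: peval_def)

lemma peval_add: "peval (p + q) A = peval p A + peval q A"
proof -
  let ?n = "max (degree p) (degree q)"
  have "peval (p + q) A = (\<Sum>i\<le>?n. mat (coeff (p+q) i) ** mpow A i)"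
    by (rule peval_bound) (simp add: degree_add_le)
  also have "\<dots> = (\<Sum>i\<le>?n. mat (coeff p i) ** mpow A i) + (\<Sum>i\<le>?n. mat (coeff q i) ** mpow A i)"
    by (simp add: mat_add_c matrix_add_rdistrib' sum.distrib)
  also have "\<dots> = peval p A + peval q A"
    using peval_bound[of p ?n A] peval_bound[of q ?n A] by simp
  finally show ?thesis .
qed

lemma peval_smult: "peval (smult c p) A = mat c ** peval p A"
proof -
  have "peval (smult c p) A = (\<Sum>i\<le>degree p. mat (coeff (smult c p) i) ** mpow A i)"
    by (rule peval_bound) simp
  also have "\<dots> = mat c ** peval p A"
    by (simp add: peval_def matrix_sum_ldistrib matrix_mul_assoc mat_mult_c)
  finally show ?thesis .
qed

lemma peval_pCons: "peval (pCons c p) A = mat c + A ** peval p A"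
proof -
  have "peval (pCons c p) A = (\<Sum>i\<le>Suc (degree p). mat (coeff (pCons c p) i) ** mpow A i)"
    by (rule peval_bound) (simp add: degree_pCons_le)
  also have "\<dots> = mat c + (\<Sum>i\<le>degree p. mat (coeff p i) ** (A ** mpow A i))"
    by (subst sum.atMost_Suc_shift) simp
  also have "\<dots> = mat c + A ** peval p A"
    by (simp add: peval_def matrix_sum_ldistrib mat_comm2)
  finally show ?thesis .
qed

lemma peval_mult: "peval (p * q) A = peval p A ** peval q A"
proof (induction p rule: pCons_induct)
  case 0
  then show ?case by simp
next
  case (pCons c p)
  have "peval (pCons c p * q) A = mat c ** peval q A + A ** (peval p A ** peval q A)"
    by (simp add: peval_add peval_smult peval_pCons pCons.IH)
  also have "\<dots> = peval (pCons c p) A ** peval q A"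
    by (simp add: peval_pCons matrix_add_rdistrib' matrix_mul_assoc)
  finally show ?case .
qed

lemma peval_const[simp]: "peval [:c:] A = mat c"
  by (simp add: peval_def)

lemma peval_1[simp]: "peval 1 A = mat 1"
  by (simp add: one_pCons)

lemma peval_lin: "peval [:-r, 1:] A = A - mat r"
  by (simp add: peval_pCons mat_uminus_c)

lemma peval_X: "peval [:0, 1:] A = A"
  by (simp add: peval_pCons)

lemma peval_power: "peval (p ^ k) A = mpow (peval p A) k"
  by (induction k) (simp_all add: peval_mult)

lemma peval_diff: "peval (p - q) A = peval p A - peval q A"
proof -
  have "peval (p - q + q) A = peval (p - q) A + peval q A" by (rule peval_add)
  then show ?thesis by simp
qed

lemma peval_comm: "peval p A ** peval q A = peval q A ** peval p A"
  by (metis peval_mult mult.commute)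

lemma peval_eigen:
  assumes "A *v x = r *s x"
  shows "peval p A *v x = poly p r *s x"
proof (induction p rule: pCons_induct)
  case 0
  then show ?case by (simp add: peval_def)
next
  case (pCons c p)
  have "peval (pCons c p) A *v x = mat c *v x + A *v (peval p A *v x)"
    by (simp add: peval_pCons matrix_vector_mult_add_rdistrib matrix_vector_mul_assoc)
  also have "\<dots> = c *s x + (r * poly p r) *s x"
    by (simp add: pCons.IH vector_scalar_commute assms)
       (simp add: mat_vec)
  also have "\<dots> = poly (pCons c p) r *s x"
    by (simp add: vec_eq_iff algebra_simps)
  finally show ?case .
qed



lemma mat_of_real_mult: "mat (complex_of_real r) ** (M::('n::finite) cm) = r *\<^sub>R M"
  by (simp add: mat_mult_left vec_eq_iff) (simp add: scaleR_conv_of_real)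

lemma annih: "\<exists>p. p \<noteq> 0 \<and> peval p (A::('n::finite) cm) = 0"
proof (cases "inj_on (mpow A) {..DIM('n cm)}")
  case True
  define D where "D = DIM('n cm)"
  define S where "S = mpow A ` {..D}"
  have fin: "finite S" by (simp add: S_def)
  have "card S = Suc D" using True by (simp add: S_def D_def card_image)
  then have "real_vector.dependent S"
    using dependent_biggerset[of S] fin by (simp add: D_def)
  then obtain u where u: "\<exists>v\<in>S. u v \<noteq> 0" "(\<Sum>v\<in>S. u v *\<^sub>R v) = 0"
    using real_vector.dependent_finite[OF fin] by blast
  define p where "p = (\<Sum>i\<le>D. monom (complex_of_real (u (mpow A i))) i)"
  have cp: "coeff p j = (if j \<le> D then complex_of_real (u (mpow A j)) else 0)" for j
    by (simp add: p_def coeff_sum coeff_monom)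
  have dp: "degree p \<le> D"
    by (rule degree_le) (simp add: cp)
  have "peval p A = (\<Sum>i\<le>D. mat (coeff p i) ** mpow A i)"
    by (rule peval_bound[OF dp])
  also have "\<dots> = (\<Sum>i\<le>D. u (mpow A i) *\<^sub>R mpow A i)"
    by (simp add: cp mat_of_real_mult)
  also have "\<dots> = (\<Sum>v\<in>S. u v *\<^sub>R v)"
    unfolding S_def by (subst sum.reindex) (use True in \<open>auto simp: D_def\<close>)
  also have "\<dots> = 0" by (rule u(2))
  finally have "peval p A = 0" .
  moreover have "p \<noteq> 0"
  proof
    assume "p = 0"
    from u(1) obtain i where "i \<le> D" "u (mpow A i) \<noteq> 0" by (auto simp: S_def)
    then have "coeff p i \<noteq> 0" by (simp add: cp)
    with \<open>p = 0\<close> show False by simp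
  qed
  ultimately show ?thesis by blast
next
  case False
  then obtain i j where ij: "i \<noteq> j" "mpow A i = mpow A j"
    unfolding inj_on_def by blast
  define p :: "complex poly" where "p = [:0,1:]^i - [:0,1:]^j"
  have "peval p A = 0"
    by (simp add: p_def peval_diff peval_power peval_X ij)
  moreover have "p \<noteq> 0"
  proof
    assume "p = 0"
    then have "degree ([:0,1::complex:]^i) = degree ([:0,1::complex:]^j)" by (simp add: p_def)
    then show False using ij(1) by (simp only: degree_linear_power)
  qed
  ultimately show ?thesis by blast
qed

definition eig :: "('n::finite) cm \<Rightarrow> complex \<Rightarrow> bool" where
  "eig A r \<longleftrightarrow> (\<exists>x. x \<noteq> 0 \<and> A *v x = r *s x)"

lemma eig_finite: "finite {r. eig (A::('n::finite) cm) r}"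
proof -
  obtain p where p: "p \<noteq> 0" "peval p A = 0" using annih by blast
  have "{r. eig A r} \<subseteq> {x. poly p x = 0}"
  proof
    fix r assume "r \<in> {r. eig A r}"
    then obtain x where x: "x \<noteq> 0" "A *v x = r *s x" by (auto simp: eig_def)
    have "poly p r *s x = 0" using peval_eigen[OF x(2), of p] p(2) by simp
    then show "r \<in> {x. poly p x = 0}" using x(1) by simp
  qed
  then show ?thesis using poly_roots_finite[OF p(1)] finite_subset by blast
qed

lemma noneig_inv:
  assumes "\<not> eig (A::('n::finite) cm) r"
  shows "\<exists>B. B ** (A - mat r) = mat 1"
proof -
  have "\<forall>x. (A - mat r) *v x = 0 \<longrightarrow> x = 0"
  proof (intro allI impI)
    fix x assume "(A - mat r) *v x = 0"
    then have "A *v x = r *s x"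
      by (simp add: matrix_vector_mult_diff_rdistrib mat_vec)
    then show "x = 0" using assms by (auto simp: eig_def)
  qed
  then show ?thesis using matrix_left_invertible_ker by blast
qed

lemma reduce:
  assumes q: "\<And>r. eig (A::('n::finite) cm) r \<Longrightarrow> poly q r = 0"
  shows "p \<noteq> 0 \<Longrightarrow> peval p A ** Y = 0 \<Longrightarrow> \<exists>k. peval (q^k) A ** Y = 0"
proof (induction "degree p" arbitrary: p Y rule: less_induct)
  case less
  show ?case
  proof (cases "degree p = 0")
    case True
    define c where "c = coeff p 0"
    have pc: "p = [:c:]" using True by (simp add: c_def degree_0_id)
    with less.prems have c0: "c \<noteq> 0" by auto
    have "mat c ** Y = 0" using less.prems pc by simp
    then have "mat (1/c) ** (mat c ** Y) = 0" by simp
    then have "Y = 0" using c0 by (simp add: matrix_mul_assoc mat_mult_c)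
    then show ?thesis by (intro exI[of _ 0]) simp
  next
    case False
    then have "\<not> constant (poly p)" by (simp add: constant_degree)
    then obtain z where "poly p z = 0" using fundamental_theorem_of_algebra by blast
    then obtain p' where pp: "p = [:-z,1:] * p'" using poly_eq_0_iff_dvd by (metis dvdE)
    have p'0: "p' \<noteq> 0" using less.prems pp by auto
    have "degree p = degree [:-z,1:] + degree p'"
      unfolding pp by (rule degree_mult_eq) (use p'0 in auto)
    then have dp: "degree p' < degree p" by simp
    have "peval p A = peval p' A ** (A - mat z)"
      unfolding pp peval_mult by (metis peval_comm peval_lin)
    then have "peval p' A ** ((A - mat z) ** Y) = 0"
      using less.prems by (simp add: matrix_mul_assoc)
    then obtain k where k: "peval (q^k) A ** ((A - mat z) ** Y) = 0"
      using less.hyps[OF dp p'0] by blast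
    have comm: "peval (q^k) A ** (A - mat z) = (A - mat z) ** peval (q^k) A"
      using peval_comm[of "q^k" A "[:-z,1:]"] by (simp add: peval_lin)
    show ?thesis
    proof (cases "eig A z")
      case True
      then have "poly q z = 0" by (rule q)
      then obtain t where qt: "q = [:-z,1:] * t" using poly_eq_0_iff_dvd by (metis dvdE)
      have pq: "peval q A = peval t A ** (A - mat z)"
        unfolding qt peval_mult by (metis peval_comm peval_lin)
      have "peval (q^Suc k) A = peval (q^k) A ** peval q A"
        by (simp only: power_Suc2 peval_mult)
      then have "peval (q^Suc k) A ** Y = peval (q^k) A ** peval t A ** (A - mat z) ** Y"
        by (simp add: pq matrix_mul_assoc)
      also have "\<dots> = peval t A ** (peval (q^k) A ** ((A - mat z) ** Y))"
        by (simp add: peval_comm[of "q^k" A t] matrix_mul_assoc)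
      also have "\<dots> = 0" using k by simp
      finally show ?thesis by blast
    next
      case False
      then obtain B where B: "B ** (A - mat z) = mat 1" using noneig_inv by blast
      have "peval (q^k) A ** Y = B ** (A - mat z) ** peval (q^k) A ** Y"
        by (simp add: B)
      also have "\<dots> = B ** (peval (q^k) A ** ((A - mat z) ** Y))"
        by (simp add: comm matrix_mul_assoc)
      also have "\<dots> = 0" using k by simp
      finally show ?thesis by blast
    qed
  qed
qed



definition hf :: "complex^'n::finite \<Rightarrow> complex^'n \<Rightarrow> complex" where
  "hf x y = (\<Sum>i\<in>UNIV. cnj (x$i) * y$i)"

lemma hf_adj: "hf ((T::('n::finite) cm) *v x) y = hf x (conj_transpose T *v y)"
proof -
  have "hf (T *v x) y = (\<Sum>i\<in>UNIV. \<Sum>j\<in>UNIV. cnj (T$i$j) * cnj (x$j) * y$i)"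
    by (simp add: hf_def matrix_vector_mult_def sum_distrib_right)
  also have "\<dots> = (\<Sum>j\<in>UNIV. \<Sum>i\<in>UNIV. cnj (T$i$j) * cnj (x$j) * y$i)"
    by (rule sum.swap)
  also have "\<dots> = hf x (conj_transpose T *v y)"
    by (simp add: hf_def matrix_vector_mult_def conj_transpose_def sum_distrib_left mult_ac)
  finally show ?thesis .
qed

lemma hf_zero: "hf x x = 0 \<Longrightarrow> x = 0"
proof -
  assume h: "hf x x = 0"
  have e: "hf x x = complex_of_real (\<Sum>i\<in>UNIV. (cmod (x$i))^2)"
    by (simp add: hf_def complex_mult_cnj cmod_def mult.commute)
  have s: "(\<Sum>i\<in>UNIV. (cmod (x$i))^2) = 0" by (metis e h of_real_eq_0_iff)
  have "\<forall>i\<in>UNIV. (cmod (x$i))^2 = 0"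
    using sum_nonneg_eq_0_iff[of UNIV "\<lambda>i. (cmod (x$i))^2"] s by simp
  then show "x = 0" by (simp add: vec_eq_iff)
qed

lemma hf_0[simp]: "hf x 0 = 0" by (simp add: hf_def)

lemma ct_ct[simp]: "conj_transpose (conj_transpose A) = A"
  by (simp add: conj_transpose_def vec_eq_iff)

lemma ct_mult: "conj_transpose ((A::('n::finite) cm) ** B) = conj_transpose B ** conj_transpose A"
  by (simp add: conj_transpose_def matrix_matrix_mult_def vec_eq_iff mult.commute)

lemma ct_diff: "conj_transpose ((A::('n::finite) cm) - B) = conj_transpose A - conj_transpose B"
  by (simp add: conj_transpose_def vec_eq_iff)

lemma ct_mat1: "conj_transpose (mat 1 :: ('n::finite) cm) = mat 1"
  by (simp add: conj_transpose_def mat_def vec_eq_iff)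

lemma normal_sq:
  assumes nT: "conj_transpose T ** T = T ** conj_transpose (T::('n::finite) cm)"
    and h: "T *v (T *v w) = 0"
  shows "T *v w = 0"
proof -
  define u where "u = T *v w"
  define C where "C = conj_transpose T"
  have "hf (C *v u) (C *v u) = hf u ((T ** C) *v u)"
    using hf_adj[of C u "C *v u"] by (simp add: C_def matrix_vector_mul_assoc)
  also have "\<dots> = hf u (C *v (T *v u))"
    using nT by (simp add: C_def matrix_vector_mul_assoc)
  also have "\<dots> = 0" using h by (simp add: u_def)
  finally have Cu: "C *v u = 0" using hf_zero by blast
  have "hf u u = hf w (C *v u)" using hf_adj[of T w u] by (simp add: u_def C_def)
  then have "hf u u = 0" using Cu by simp
  then show ?thesis using hf_zero u_def by blast
qed

lemma normal_nilp:
  assumes nT: "conj_transpose T ** T = T ** conj_transpose (T::('n::finite) cm)"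
  shows "mpow T (Suc k) = 0 \<Longrightarrow> T = 0"
proof (induction k)
  case 0
  then show ?case by simp
next
  case (Suc k)
  have "mpow T (Suc k) *v v = 0" for v
  proof -
    define w where "w = mpow T k *v v"
    have "T *v (T *v w) = mpow T (Suc (Suc k)) *v v"
      by (simp add: w_def matrix_vector_mul_assoc)
    then have "T *v (T *v w) = 0" using Suc.prems by simp
    then have "T *v w = 0" using normal_sq[OF nT] by blast
    then show ?thesis by (simp add: w_def matrix_vector_mul_assoc)
  qed
  then have "mpow T (Suc k) = 0" by (simp add: matrix_eq)
  then show ?case by (rule Suc.IH)
qed

lemma ct_mpow: "conj_transpose (mpow (A::('n::finite) cm) k) = mpow (conj_transpose A) k"
  by (induction k) (simp_all add: ct_mat1 ct_mult mpow_comm)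

lemma unitary_mpow:
  assumes "unitary (A::('n::finite) cm)"
  shows "unitary (mpow A k)"
proof -
  have 1: "conj_transpose A ** A = mat 1" "A ** conj_transpose A = mat 1"
    using assms by (auto simp: unitary_def)
  have "mpow (conj_transpose A) k ** mpow A k = mat 1 \<and> mpow A k ** mpow (conj_transpose A) k = mat 1"
  proof (induction k)
    case 0 then show ?case by simp
  next
    case (Suc k)
    have a: "mpow (conj_transpose A) (Suc k) ** mpow A (Suc k)
       = conj_transpose A ** (mpow (conj_transpose A) k ** mpow A k) ** A"
      by (simp add: mpow_comm[of A] matrix_mul_assoc)
    have b: "mpow A (Suc k) ** mpow (conj_transpose A) (Suc k)
       = A ** (mpow A k ** mpow (conj_transpose A) k) ** conj_transpose A"
      by (simp add: mpow_comm[of "conj_transpose A"] matrix_mul_assoc)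
    show ?case using a b Suc.IH 1 by simp
  qed
  then show ?thesis by (simp add: unitary_def ct_mpow)
qed

lemma unitary_pow_one:
  assumes U: "unitary (W::('n::finite) cm)" and nil: "mpow (W - mat 1) k = 0"
  shows "W = mat 1"
proof (cases k)
  case 0
  then have "mat 1 = (0::'n cm)" using nil by simp
  then have "\<And>M::'n cm. M = 0" by (metis matrix_mul_rid times0_right)
  then show ?thesis by metis
next
  case (Suc m)
  let ?T = "W - mat 1"
  have 1: "conj_transpose W ** W = mat 1" "W ** conj_transpose W = mat 1"
    using U by (auto simp: unitary_def)
  have "conj_transpose ?T ** ?T = ?T ** conj_transpose ?T"
    by (simp add: ct_diff ct_mat1 matrix_diff_rdistrib' matrix_diff_ldistrib' 1)
  then have "?T = 0" using normal_nilp nil Suc by blast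
  then show ?thesis by simp
qed



lemma odd_order:
  fixes S :: "complex set"
  assumes fin: "finite S" and nz: "\<And>r. r \<in> S \<Longrightarrow> r \<noteq> 0"
    and step: "\<And>r. r \<in> S \<Longrightarrow> \<exists>s\<in>S. s^2 = r^3" and r: "r \<in> S"
  shows "\<exists>m. odd m \<and> r^m = 1"
proof -
  define f where "f = (\<lambda>r. SOME s. s \<in> S \<and> s^2 = r^3)"
  have f: "f x \<in> S \<and> (f x)^2 = x^3" if "x \<in> S" for x
    unfolding f_def by (rule someI_ex) (use step[OF that] in blast)
  define l where "l = (\<lambda>k. (f ^^ k) r)"
  have lS: "l k \<in> S" for k
    by (induction k) (simp_all add: l_def r f)
  have lstep: "(l (Suc k))^2 = (l k)^3" for k
    using f[OF lS[of k]] by (simp add: l_def)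
  have lpow: "(l (i + k))^(2^k) = (l i)^(3^k)" for i k
  proof (induction k)
    case 0 then show ?case by simp
  next
    case (Suc k)
    have "(l (i + Suc k))^(2^Suc k) = ((l (Suc (i + k)))^2)^(2^k)"
      by (simp add: power_mult[symmetric] mult.commute)
    also have "\<dots> = ((l (i+k))^(2^k))^3"
      by (simp add: lstep power_mult[symmetric] mult.commute)
    also have "\<dots> = (l i)^(3^Suc k)"
      by (simp add: Suc.IH power_mult[symmetric] mult.commute)
    finally show ?case .
  qed
  have "\<not> inj l"
  proof
    assume "inj l"
    have "finite (range l)" using fin lS by (meson finite_subset image_subsetI)
    then have "finite (UNIV :: nat set)" using \<open>inj l\<close> finite_imageD by blast
    then show False by simp
  qed
  then obtain i j where ij: "i < j" "l i = l j"
    unfolding inj_def by (metis linorder_neqE_nat)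
  define d where "d = j - i"
  have d0: "d > 0" and jd: "j = i + d" using ij by (auto simp: d_def)
  define \<mu> where "\<mu> = l i"
  have "\<mu>^(2^d) = \<mu>^(3^d)" using lpow[of i d] ij(2) jd by (simp add: \<mu>_def)
  define e :: nat where "e = 3^d - 2^d"
  have le: "(2::nat)^d \<le> 3^d" by (simp add: power_mono)
  have "\<mu>^(3^d) = \<mu>^(2^d) * \<mu>^e"
    using le by (simp add: e_def power_add[symmetric])
  moreover have "\<mu> \<noteq> 0" using nz lS by (simp add: \<mu>_def)
  ultimately have me: "\<mu>^e = 1" using \<open>\<mu>^(2^d) = \<mu>^(3^d)\<close> by simp
  have oe: "odd e"
  proof -
    have "(3::nat)^d = 2^d + e" using le by (simp add: e_def)
    moreover have "odd ((3::nat)^d)" by simp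
    moreover have "even ((2::nat)^d)" using d0 by simp
    ultimately show ?thesis by presburger
  qed
  have r0: "\<mu>^(2^i) = r^(3^i)" using lpow[of 0 i] by (simp add: \<mu>_def l_def)
  have "r^(3^i * e) = 1"
    by (metis r0 me power_mult power_one mult.commute)
  moreover have "odd (3^i * e)" using oe by simp
  ultimately show ?thesis by blast
qed

lemma eig_step:
  fixes a b bi :: "('n::finite) cm"
  assumes h: "(a ** a) ** b = b ** (a ** a ** a)" and bi: "bi ** b = mat 1"
    and e: "eig a r"
  shows "\<exists>s. eig a s \<and> s^2 = r^3"
proof -
  obtain x where x: "x \<noteq> 0" "a *v x = r *s x" using e by (auto simp: eig_def)
  define y where "y = b *v x"
  have y0: "y \<noteq> 0"
  proof
    assume "y = 0"
    then have "bi *v (b *v x) = 0" by (simp add: y_def)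
    then show False using x(1) bi by (simp add: matrix_vector_mul_assoc)
  qed
  have h2: "((a ** a) ** b) *v x = (b ** (a ** a ** a)) *v x" using h by simp
  have "a *v (a *v y) = b *v (a *v (a *v (a *v x)))"
    using h2[unfolded matrix_vector_mul_assoc[symmetric]] by (simp add: y_def)
  then have ay: "a *v (a *v y) = r^3 *s y"
    by (simp add: x(2) vector_scalar_commute y_def power3_eq_cube mult.assoc)
  define s0 where "s0 = csqrt (r^3)"
  have s0: "s0^2 = r^3" by (simp add: s0_def)
  define z where "z = a *v y - s0 *s y"
  show ?thesis
  proof (cases "z = 0")
    case True
    then have "a *v y = s0 *s y" by (simp add: z_def)
    then show ?thesis using y0 s0 by (auto simp: eig_def)
  next
    case False
    have az: "a *v z = (-s0) *s z"
      by (simp add: z_def matrix_vector_mult_diff_distrib vector_scalar_commute ay s0[symmetric])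
         (simp add: vec_eq_iff algebra_simps power2_eq_square)
    have "eig a (-s0)" unfolding eig_def using False az by blast
    then show ?thesis using s0 by auto
  qed
qed

lemma mpow_commute: "(A::('n::finite) cm) ** B = B ** A \<Longrightarrow> A ** mpow B k = mpow B k ** A"
  by (induction k) (simp_all, metis matrix_mul_assoc)

theorem main:
  fixes a b bi :: "('n::finite) cm"
  assumes ua: "unitary a" and bi1: "bi ** b = mat 1" and bi2: "b ** bi = mat 1"
    and h: "bi ** (a ** a) ** b = a ** a ** a"
  shows "a ** (bi ** a ** b) = (bi ** a ** b) ** a"
proof -
  have h': "(a ** a) ** b = b ** (a ** a ** a)"
    using arg_cong[OF h, of "\<lambda>M. b ** M"] bi2 by (simp add: matrix_mul_assoc)
  define S where "S = {r. eig a r}"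
  have finS: "finite S" using eig_finite by (simp add: S_def)
  have nz: "r \<noteq> 0" if "r \<in> S" for r
  proof
    assume "r = 0"
    with that obtain x where "x \<noteq> 0" "a *v x = 0" by (auto simp: S_def eig_def)
    moreover have "conj_transpose a *v (a *v x) = x"
      using ua by (simp add: unitary_def matrix_vector_mul_assoc)
    ultimately show False by simp
  qed
  have stepS: "\<exists>s\<in>S. s^2 = r^3" if "r \<in> S" for r
    using eig_step[OF h' bi1, of r] that by (auto simp: S_def)
  have "\<forall>r\<in>S. \<exists>m. odd m \<and> r^m = 1"
    using odd_order[OF finS nz stepS] by blast
  then obtain m where m: "\<And>r. r \<in> S \<Longrightarrow> odd (m r) \<and> r^(m r) = 1" by metis
  define N where "N = (\<Prod>r\<in>S. m r)"
  have oN: "odd N" unfolding N_def using finS m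
    by (induction S rule: finite_induct) auto
  have rN: "r^N = 1" if "r \<in> S" for r
  proof -
    have "m r dvd N" unfolding N_def using finS that by auto
    then obtain t where "N = m r * t" by blast
    then show ?thesis using m[OF that] by (simp add: power_mult)
  qed
  define q :: "complex poly" where "q = [:0,1:]^N - 1"
  have q: "poly q r = 0" if "eig a r" for r
    using rN[of r] that by (simp add: q_def S_def)
  obtain p where p: "p \<noteq> 0" "peval p a = 0" using annih by blast
  obtain k where "peval (q^k) a ** mat 1 = 0"
    using reduce[of a q p "mat 1", OF q p(1)] p(2) by auto
  then have "mpow (mpow a N - mat 1) k = 0"
    by (simp add: peval_power q_def peval_diff peval_X)
  then have aN: "mpow a N = mat 1"
    using unitary_pow_one unitary_mpow[OF ua] by blast
  define c where "c = bi ** a ** b"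
  have cpow: "mpow c j = bi ** mpow a j ** b" for j
  proof (induction j)
    case 0 then show ?case by (simp add: bi1)
  next
    case (Suc j)
    have "mpow c (Suc j) = c ** (bi ** mpow a j ** b)" using Suc by simp
    also have "\<dots> = bi ** a ** (b ** bi) ** mpow a j ** b" by (simp add: c_def matrix_mul_assoc)
    also have "\<dots> = bi ** mpow a (Suc j) ** b" by (simp add: bi2 matrix_mul_assoc)
    finally show ?case .
  qed
  have cN: "mpow c N = mat 1" using cpow[of N] aN bi1 by simp
  have cc: "c ** c = a ** a ** a"
  proof -
    have "c ** c = bi ** a ** (b ** bi) ** a ** b" by (simp add: c_def matrix_mul_assoc)
    then show ?thesis using h bi2 by (simp add: matrix_mul_assoc)
  qed
  obtain n where Nn: "N = 2 * n + 1" using oN oddE by blast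
  have "c = mpow c (Suc N)" using cN by simp
  also have "\<dots> = mpow (mpow c 2) (Suc n)"
  proof -
    have "Suc N = 2 * Suc n" using Nn by simp
    then show ?thesis by (simp only: mpow_mult)
  qed
  also have "\<dots> = mpow (a ** a ** a) (Suc n)"
    by (simp add: numeral_2_eq_2 cc)
  finally have ce: "c = mpow (a ** a ** a) (Suc n)" .
  have "a ** (a ** a ** a) = (a ** a ** a) ** a" by (simp add: matrix_mul_assoc)
  then have "a ** c = c ** a" unfolding ce by (rule mpow_commute)
  then show ?thesis by (simp add: c_def)
qed


theorem corollary2p2:
  fixes a b :: "complex^'n^'n"
  assumes "unitary a" and "unitary b"
    and "matrix_inv b ** (a ** a) ** b = a ** a ** a"
  shows "a ** matrix_inv b ** a ** b = matrix_inv b ** a ** b ** a"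
proof -
  have ex: "\<exists>A'. b ** A' = mat 1 \<and> A' ** b = mat 1"
    using assms(2) by (auto simp: unitary_def)
  have bi: "b ** matrix_inv b = mat 1 \<and> matrix_inv b ** b = mat 1"
    unfolding matrix_inv_def by (rule someI_ex[OF ex])
  have "a ** (matrix_inv b ** a ** b) = (matrix_inv b ** a ** b) ** a"
    using main[OF assms(1) conjunct2[OF bi] conjunct1[OF bi] assms(3)] .
  then show ?thesis by (simp add: matrix_mul_assoc)
qed

end
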